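(* Let $m_1,\dots,m_r,n$ be positive integers with $m=\sum_{i=1}^r m_i\le n$, and suppose that $\sum_{i=1}^r\lfloor m_i n/(m+1)\rfloor\ge\lfloor mn/(m+1)\rfloor$ and $m_i n/(m+1)\ge\lceil m_i n/(m+2)\rceil$ for all $i\in[r]$. Let $h$ be the least integer $t\ge m+2$ such that either there is some $i\in[r]$ with $\frac{m_i n}{t}<\big\lceil \frac{m_i n}{t+1}\big\rceil$, or there are indices $i\ne j$ such that $t$ divides neither $m_i n$ nor $m_j n$. Then $K_{m_1 n,\dots,m_r n}$ is equitably $k$-colorable for every integer $k$ with $\sum_{i=1}^r\lceil m_i n/h\rceil\le k\le\lceil mn/(m+1)\rceil-1$.
   Context: A (proper) $k$-coloring of a graph $G$ is a map $f:V(G)\to\{1,\dots,k\}$ with $f(x)\ne f(y)$ whenever $xy\in E(G)$; an equitable $k$-coloring is a $k$-coloring in which any two color classes differ in size by at most $1$; $G$ is equitably $k$-colorable if it has one. $K_{a_1,\dots,a_r}$ denotes the complete multipartite graph with parts of sizes $a_1,\dots,a_r$. $[r]=\{1,\dots,r\}$. *)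

theory Defs
  imports Complex_Main
begin

definition proper_coloring :: "'v set \<Rightarrow> ('v \<Rightarrow> 'v \<Rightarrow> bool) \<Rightarrow> nat \<Rightarrow> ('v \<Rightarrow> nat) \<Rightarrow> bool" where
  "proper_coloring V E k f \<longleftrightarrow>
     (\<forall>x\<in>V. f x \<in> {1..k}) \<and> (\<forall>x\<in>V. \<forall>y\<in>V. E x y \<longrightarrow> f x \<noteq> f y)"

definition equitable_coloring :: "'v set \<Rightarrow> ('v \<Rightarrow> 'v \<Rightarrow> bool) \<Rightarrow> nat \<Rightarrow> ('v \<Rightarrow> nat) \<Rightarrow> bool" where
  "equitable_coloring V E k f \<longleftrightarrow> proper_coloring V E k f \<and>
     (\<forall>c\<in>{1..k}. \<forall>d\<in>{1..k}. card {x\<in>V. f x = c} \<le> card {x\<in>V. f x = d} + 1)"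

definition equitably_colorable :: "'v set \<Rightarrow> ('v \<Rightarrow> 'v \<Rightarrow> bool) \<Rightarrow> nat \<Rightarrow> bool" where
  "equitably_colorable V E k \<longleftrightarrow> (\<exists>f. equitable_coloring V E k f)"

text \<open>Complete multipartite graph K_{a_1,...,a_r}: vertex (i,v) lies in part i (1 \<le> i \<le> r, v < a i);
  two vertices are adjacent iff they lie in different parts.\<close>

definition cmp_vertices :: "nat \<Rightarrow> (nat \<Rightarrow> nat) \<Rightarrow> (nat \<times> nat) set" where
  "cmp_vertices r a = {(i, v). i \<in> {1..r} \<and> v < a i}"

definition cmp_adj :: "nat \<times> nat \<Rightarrow> nat \<times> nat \<Rightarrow> bool" where
  "cmp_adj x y \<longleftrightarrow> fst x \<noteq> fst y"

end

theory Submission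
  imports Defs
begin
definition cdiv :: "nat \<Rightarrow> nat \<Rightarrow> nat" where "cdiv a b = (a + b - 1) div b"

lemma cdiv_le_iff: "b > 0 \<Longrightarrow> cdiv a b \<le> p \<longleftrightarrow> a \<le> p * b"
proof -
  assume b: "b > 0"
  have "cdiv a b \<le> p \<longleftrightarrow> (a + b - 1) div b < Suc p" unfolding cdiv_def by (rule le_simps(2)[symmetric])
  also have "\<dots> \<longleftrightarrow> a + b - 1 < Suc p * b" using b by (simp add: div_less_iff_less_mult)
  also have "\<dots> \<longleftrightarrow> a \<le> p * b" using b by auto
  finally show ?thesis .
qed

lemma cdiv_ge: "b > 0 \<Longrightarrow> a \<le> cdiv a b * b"
  using cdiv_le_iff by blast

lemma le_div_iff': "(b::nat) > 0 \<Longrightarrow> p \<le> a div b \<longleftrightarrow> p * b \<le> a"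
  by (simp add: less_eq_div_iff_mult_less_eq)

lemma ceiling_cdiv: "b > 0 \<Longrightarrow> \<lceil>real a / real b\<rceil> = int (cdiv a b)"
proof -
  assume b: "b > 0"
  have 1: "cdiv a b * b < a + b"
  proof -
    have "cdiv a b * b \<le> a + b - 1" unfolding cdiv_def by simp
    thus ?thesis using b by linarith
  qed
  have 2: "a \<le> cdiv a b * b" using cdiv_ge[OF b] .
  have "real (cdiv a b) * real b < real a + real b" using 1 by (metis of_nat_add of_nat_less_iff of_nat_mult)
  hence "real (cdiv a b) - 1 < real a / real b" using b by (simp add: field_simps)
  moreover have "real a \<le> real (cdiv a b) * real b" using 2 by (metis of_nat_le_iff of_nat_mult)
  hence "real a / real b \<le> real (cdiv a b)" using b by (simp add: field_simps)
  ultimately show ?thesis by (simp add: ceiling_eq_iff)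
qed

lemma card_mod_bounds:
  fixes p d s a :: nat
  assumes p: "p > 0" and d: "d < p" and lo: "p*s \<le> a" and hi: "a \<le> p*(s+1)"
  shows "s \<le> card {v. v < a \<and> v mod p = d} \<and> card {v. v < a \<and> v mod p = d} \<le> s+1"
proof -
  let ?Q = "{q. q*p + d < a}"
  have eq: "{v. v < a \<and> v mod p = d} = (\<lambda>q. q*p+d) ` ?Q"
  proof (rule set_eqI, rule iffI)
    fix v assume "v \<in> {v. v < a \<and> v mod p = d}"
    hence v: "v < a" "v mod p = d" by auto
    have "v = (v div p)*p + d" using v(2) by (metis div_mult_mod_eq)
    thus "v \<in> (\<lambda>q. q*p+d) ` ?Q" using v(1) by (intro image_eqI[of _ _ "v div p"]) auto
  next
    fix v assume "v \<in> (\<lambda>q. q*p+d) ` ?Q"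
    then obtain q where "q*p+d < a" "v = q*p+d" by auto
    thus "v \<in> {v. v < a \<and> v mod p = d}" using d by simp
  qed
  have inj: "inj_on (\<lambda>q. q*p+d) ?Q" using p by (auto simp: inj_on_def)
  have s1: "{..<s} \<subseteq> ?Q"
  proof
    fix q assume "q \<in> {..<s}"
    hence "Suc q \<le> s" by simp
    hence "Suc q * p \<le> s * p" by (rule mult_le_mono1)
    hence "q*p + p \<le> a" using lo by (simp add: mult.commute)
    thus "q \<in> ?Q" using d by simp
  qed
  have s2: "?Q \<subseteq> {..<s+1}"
  proof
    fix q assume "q \<in> ?Q"
    hence "q*p < (s+1)*p" using hi by (simp add: mult.commute)
    hence "q < s+1" by (metis mult_less_cancel2)
    thus "q \<in> {..<s+1}" by simp
  qed
  have fin: "finite ?Q" using finite_subset[OF s2] by simp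
  have "card {v. v < a \<and> v mod p = d} = card ?Q" using eq card_image[OF inj] by simp
  moreover have "s \<le> card ?Q" using card_mono[OF fin s1] by simp
  moreover have "card ?Q \<le> s+1" using card_mono[OF _ s2] by simp
  ultimately show ?thesis by simp
qed

lemma cmp_vertices_Suc:
  "cmp_vertices (Suc r) a = cmp_vertices r a \<union> {(i,v). i = Suc r \<and> v < a (Suc r)}"
  by (auto simp: cmp_vertices_def le_Suc_eq)

lemma cmp_vertices_finite: "finite (cmp_vertices r a)"
proof -
  have "cmp_vertices r a = Sigma {1..r} (\<lambda>i. {..<a i})" by (auto simp: cmp_vertices_def)
  thus ?thesis by simp
qed

lemma color_ind:
  fixes r s :: nat and a p :: "nat \<Rightarrow> nat"
  assumes "\<forall>i\<in>{1..r}. p i \<ge> 1 \<and> p i * s \<le> a i \<and> a i \<le> p i * (s+1)"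
  shows "\<exists>f. (\<forall>x\<in>cmp_vertices r a. f x \<in> {1..(\<Sum>i=1..r. p i)})
     \<and> (\<forall>x\<in>cmp_vertices r a. \<forall>y\<in>cmp_vertices r a. cmp_adj x y \<longrightarrow> f x \<noteq> f y)
     \<and> (\<forall>c\<in>{1..(\<Sum>i=1..r. p i)}. s \<le> card {x\<in>cmp_vertices r a. f x = c}
            \<and> card {x\<in>cmp_vertices r a. f x = c} \<le> s+1)"
  using assms
proof (induction r)
  case 0
  show ?case by (auto simp: cmp_vertices_def)
next
  case (Suc r)
  let ?V = "cmp_vertices r a"
  let ?W = "{(i,v). i = Suc r \<and> v < a (Suc r)}"
  let ?K = "\<Sum>i=1..r. p i"
  let ?P = "p (Suc r)"
  from Suc.prems have pr: "?P \<ge> 1" "?P * s \<le> a (Suc r)" "a (Suc r) \<le> ?P * (s+1)" by auto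
  from Suc.prems obtain f where
    f1: "\<forall>x\<in>?V. f x \<in> {1..?K}" and
    f2: "\<forall>x\<in>?V. \<forall>y\<in>?V. cmp_adj x y \<longrightarrow> f x \<noteq> f y" and
    f3: "\<forall>c\<in>{1..?K}. s \<le> card {x\<in>?V. f x = c} \<and> card {x\<in>?V. f x = c} \<le> s+1"
    using Suc.IH by auto
  define g where "g x = (if fst x = Suc r then ?K + snd x mod ?P + 1 else f x)" for x
  have sumS: "(\<Sum>i=1..Suc r. p i) = ?K + ?P" by simp
  have Vfst: "\<forall>x\<in>?V. fst x \<le> r" by (auto simp: cmp_vertices_def)
  have gV: "\<forall>x\<in>?V. g x = f x" using Vfst by (auto simp: g_def)
  have gW: "\<forall>x\<in>?W. g x = ?K + snd x mod ?P + 1" by (auto simp: g_def)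
  have gWr: "\<forall>x\<in>?W. g x > ?K \<and> g x \<le> ?K + ?P"
  proof
    fix x assume "x \<in> ?W"
    moreover have "snd x mod ?P < ?P" using pr(1) by simp
    ultimately show "g x > ?K \<and> g x \<le> ?K + ?P" using gW by auto
  qed
  have VS: "cmp_vertices (Suc r) a = ?V \<union> ?W" by (rule cmp_vertices_Suc)
  show ?case
  proof (intro exI[of _ g] conjI)
    show "\<forall>x\<in>cmp_vertices (Suc r) a. g x \<in> {1..(\<Sum>i=1..Suc r. p i)}"
      unfolding VS sumS using f1 gV gWr by fastforce
    show "\<forall>x\<in>cmp_vertices (Suc r) a. \<forall>y\<in>cmp_vertices (Suc r) a. cmp_adj x y \<longrightarrow> g x \<noteq> g y"
    proof (intro ballI impI)
      fix x y assume x: "x \<in> cmp_vertices (Suc r) a" and y: "y \<in> cmp_vertices (Suc r) a" and xy: "cmp_adj x y"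
      show "g x \<noteq> g y"
      proof (cases "x \<in> ?V")
        case True
        show ?thesis
        proof (cases "y \<in> ?V")
          case True
          thus ?thesis using \<open>x \<in> ?V\<close> f2 gV xy by auto
        next
          case False
          hence "y \<in> ?W" using y VS by auto
          thus ?thesis using \<open>x \<in> ?V\<close> f1 gV gWr by fastforce
        qed
      next
        case False
        hence xW: "x \<in> ?W" using x VS by auto
        show ?thesis
        proof (cases "y \<in> ?V")
          case True
          thus ?thesis using xW f1 gV gWr by fastforce
        next
          case False
          hence "y \<in> ?W" using y VS by auto
          thus ?thesis using xW xy by (auto simp: cmp_adj_def)
        qed
      qed
    qed
    show "\<forall>c\<in>{1..(\<Sum>i=1..Suc r. p i)}. s \<le> card {x\<in>cmp_vertices (Suc r) a. g x = c}
            \<and> card {x\<in>cmp_vertices (Suc r) a. g x = c} \<le> s+1"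
    proof
      fix c assume c: "c \<in> {1..(\<Sum>i=1..Suc r. p i)}"
      show "s \<le> card {x\<in>cmp_vertices (Suc r) a. g x = c} \<and> card {x\<in>cmp_vertices (Suc r) a. g x = c} \<le> s+1"
      proof (cases "c \<le> ?K")
        case True
        have "{x\<in>cmp_vertices (Suc r) a. g x = c} = {x\<in>?V. f x = c}"
          unfolding VS using True gV gWr by fastforce
        thus ?thesis using f3 True c by auto
      next
        case False
        define d where "d = c - ?K - 1"
        have d: "d < ?P" using c False sumS by (auto simp: d_def)
        have "{x\<in>cmp_vertices (Suc r) a. g x = c} = (\<lambda>v. (Suc r, v)) ` {v. v < a (Suc r) \<and> v mod ?P = d}"
        proof (rule set_eqI, rule iffI)
          fix x assume "x \<in> {x\<in>cmp_vertices (Suc r) a. g x = c}"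
          hence xx: "x \<in> ?V \<union> ?W" "g x = c" using VS by auto
          have "x \<notin> ?V" using xx f1 gV False by fastforce
          hence "x \<in> ?W" using xx by auto
          thus "x \<in> (\<lambda>v. (Suc r, v)) ` {v. v < a (Suc r) \<and> v mod ?P = d}"
            using gW xx(2) by (auto simp: d_def)
        next
          fix x assume "x \<in> (\<lambda>v. (Suc r, v)) ` {v. v < a (Suc r) \<and> v mod ?P = d}"
          then obtain v where v: "x = (Suc r, v)" "v < a (Suc r)" "v mod ?P = d" by auto
          have "g x = c" using v c False by (auto simp: g_def d_def)
          thus "x \<in> {x\<in>cmp_vertices (Suc r) a. g x = c}" using v VS by auto
        qed
        moreover have "inj (\<lambda>v. (Suc r, v))" by (auto simp: inj_on_def)
        ultimately have "card {x\<in>cmp_vertices (Suc r) a. g x = c} = card {v. v < a (Suc r) \<and> v mod ?P = d}"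
          by (simp add: card_image inj_on_def)
        thus ?thesis using card_mod_bounds[of ?P d s "a (Suc r)"] pr d by (simp add: mult.commute)
      qed
    qed
  qed
qed

lemma choose_p:
  fixes lo hi :: "nat \<Rightarrow> nat"
  assumes "\<forall>i\<in>{1..r}. lo i \<le> hi i" "(\<Sum>i=1..r. lo i) \<le> k" "k \<le> (\<Sum>i=1..r. hi i)"
  shows "\<exists>p. (\<forall>i\<in>{1..r}. lo i \<le> p i \<and> p i \<le> hi i) \<and> (\<Sum>i=1..r. p i) = k"
  using assms
proof (induction r arbitrary: k)
  case 0
  thus ?case by simp
next
  case (Suc r)
  let ?SL = "\<Sum>i=1..r. lo i"
  let ?SH = "\<Sum>i=1..r. hi i"
  define v where "v = min (hi (Suc r)) (k - ?SL)"
  have sl: "?SL + lo (Suc r) \<le> k" using Suc.prems(2) by simp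
  have sh: "k \<le> ?SH + hi (Suc r)" using Suc.prems(3) by simp
  have lhs: "lo (Suc r) \<le> hi (Suc r)" using Suc.prems(1) by simp
  have slh: "?SL \<le> ?SH" using Suc.prems(1) by (intro sum_mono) auto
  have v1: "lo (Suc r) \<le> v" "v \<le> hi (Suc r)" "v \<le> k" using sl lhs by (auto simp: v_def)
  have k1: "?SL \<le> k - v" "k - v \<le> ?SH" using sl sh slh by (auto simp: v_def min_def)
  obtain p where p: "\<forall>i\<in>{1..r}. lo i \<le> p i \<and> p i \<le> hi i" "(\<Sum>i=1..r. p i) = k - v"
    using Suc.IH[of "k - v"] Suc.prems(1) k1 by auto
  define p' where "p' = p(Suc r := v)"
  have "(\<Sum>i=1..r. p' i) = (\<Sum>i=1..r. p i)" by (intro sum.cong) (auto simp: p'_def)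
  hence "(\<Sum>i=1..Suc r. p' i) = k" using p(2) v1 by (simp add: p'_def)
  moreover have "\<forall>i\<in>{1..Suc r}. lo i \<le> p' i \<and> p' i \<le> hi i"
    using p(1) v1 by (auto simp: p'_def le_Suc_eq)
  ultimately show ?case by blast
qed

lemma cdiv_dvd_add: "t > 0 \<Longrightarrow> t dvd x \<Longrightarrow> cdiv (x + y) t = x div t + cdiv y t"
proof -
  assume t: "t > 0" and "t dvd x"
  then obtain q where q: "x = t*q" by auto
  have e: "x + y + t - 1 = (y + t - 1) + q*t" using t q by (simp add: algebra_simps)
  have "cdiv (x+y) t = ((y + t - 1) + q*t) div t" unfolding cdiv_def e ..
  also have "\<dots> = q + (y + t - 1) div t" using t by (rule div_mult_self1[OF gr_implies_not0])
  finally show ?thesis using t q by (simp add: cdiv_def)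
qed

lemma cdiv_0: "t > 0 \<Longrightarrow> cdiv 0 t = 0" by (simp add: cdiv_def)

lemma cdiv_dvd: "t > 0 \<Longrightarrow> t dvd x \<Longrightarrow> cdiv x t = x div t"
  using cdiv_dvd_add[of t x 0] cdiv_0[of t] by simp

lemma dvd_sums:
  fixes a :: "nat \<Rightarrow> nat"
  assumes t: "t > 0" and "\<forall>i\<in>{1..r}. \<forall>j\<in>{1..r}. i \<noteq> j \<longrightarrow> t dvd a i \<or> t dvd a j"
  shows "(\<Sum>i=1..r. cdiv (a i) t) = cdiv (\<Sum>i=1..r. a i) t \<and> (\<Sum>i=1..r. a i div t) = (\<Sum>i=1..r. a i) div t"
  using assms(2)
proof (induction r)
  case 0
  show ?case using t by (simp add: cdiv_def)
next
  case (Suc r)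
  let ?A = "\<Sum>i=1..r. a i"
  have IH: "(\<Sum>i=1..r. cdiv (a i) t) = cdiv ?A t \<and> (\<Sum>i=1..r. a i div t) = ?A div t"
    using Suc.prems by (intro Suc.IH) auto
  have S1: "(\<Sum>i=1..Suc r. cdiv (a i) t) = (\<Sum>i=1..r. cdiv (a i) t) + cdiv (a (Suc r)) t" by simp
  have S2: "(\<Sum>i=1..Suc r. a i div t) = (\<Sum>i=1..r. a i div t) + a (Suc r) div t" by simp
  have S3: "(\<Sum>i=1..Suc r. a i) = ?A + a (Suc r)" by simp
  show ?case
  proof (cases "t dvd a (Suc r)")
    case True
    have "cdiv (?A + a (Suc r)) t = a (Suc r) div t + cdiv ?A t"
      using cdiv_dvd_add[OF t True, of ?A] by (simp add: add.commute)
    moreover have "(?A + a (Suc r)) div t = ?A div t + a (Suc r) div t"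
      using True by (simp add: div_plus_div_distrib_dvd_right)
    moreover have "cdiv (a (Suc r)) t = a (Suc r) div t" using cdiv_dvd[OF t True] .
    ultimately show ?thesis unfolding S1 S2 S3 using IH by linarith
  next
    case False
    have "\<forall>i\<in>{1..r}. t dvd a i"
    proof
      fix i assume i: "i \<in> {1..r}"
      hence "i \<in> {1..Suc r}" "Suc r \<in> {1..Suc r}" "i \<noteq> Suc r" by auto
      thus "t dvd a i" using Suc.prems False by blast
    qed
    hence dA: "t dvd ?A" by (metis dvd_sum)
    have "cdiv (?A + a (Suc r)) t = ?A div t + cdiv (a (Suc r)) t"
      using cdiv_dvd_add[OF t dA] by simp
    moreover have "cdiv ?A t = ?A div t" using cdiv_dvd[OF t dA] .
    moreover have "(?A + a (Suc r)) div t = ?A div t + a (Suc r) div t"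
      using dA by (simp add: div_plus_div_distrib_dvd_left)
    ultimately show ?thesis unfolding S1 S2 S3 using IH by linarith
  qed
qed

lemma main_comb:
  fixes r s k :: nat and a :: "nat \<Rightarrow> nat"
  assumes s: "s > 0" and apos: "\<forall>i\<in>{1..r}. a i \<ge> 1"
    and G1: "\<forall>i\<in>{1..r}. cdiv (a i) (s+1) \<le> a i div s"
    and G2: "(\<Sum>i=1..r. cdiv (a i) (s+1)) \<le> k"
    and G3: "k \<le> (\<Sum>i=1..r. a i div s)"
  shows "equitably_colorable (cmp_vertices r a) cmp_adj k"
proof -
  obtain p where p: "\<forall>i\<in>{1..r}. cdiv (a i) (s+1) \<le> p i \<and> p i \<le> a i div s" "(\<Sum>i=1..r. p i) = k"
    using choose_p[OF G1 G2 G3] by blast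
  have pp: "\<forall>i\<in>{1..r}. p i \<ge> 1 \<and> p i * s \<le> a i \<and> a i \<le> p i * (s+1)"
  proof
    fix i assume i: "i \<in> {1..r}"
    have 1: "p i * s \<le> a i" using p(1) i le_div_iff'[OF s] by blast
    have 2: "a i \<le> p i * (s+1)" using p(1) i cdiv_le_iff[of "s+1"] by auto
    have "a i \<ge> 1" using apos i by blast
    hence "p i \<noteq> 0" using 2 by (metis mult_is_0 le_zero_eq not_one_le_zero)
    thus "p i \<ge> 1 \<and> p i * s \<le> a i \<and> a i \<le> p i * (s+1)" using 1 2 by simp
  qed
  obtain f where f1: "\<forall>x\<in>cmp_vertices r a. f x \<in> {1..k}"
    and f2: "\<forall>x\<in>cmp_vertices r a. \<forall>y\<in>cmp_vertices r a. cmp_adj x y \<longrightarrow> f x \<noteq> f y"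
    and f3: "\<forall>c\<in>{1..k}. s \<le> card {x\<in>cmp_vertices r a. f x = c} \<and> card {x\<in>cmp_vertices r a. f x = c} \<le> s+1"
    using color_ind[OF pp] p(2) by auto
  have "equitable_coloring (cmp_vertices r a) cmp_adj k f"
    unfolding equitable_coloring_def proper_coloring_def
  proof (intro conjI ballI)
    fix c d assume cd: "c \<in> {1..k}" "d \<in> {1..k}"
    have "card {x\<in>cmp_vertices r a. f x = c} \<le> s + 1" using f3 cd(1) by blast
    moreover have "s \<le> card {x\<in>cmp_vertices r a. f x = d}" using f3 cd(2) by blast
    ultimately show "card {x\<in>cmp_vertices r a. f x = c} \<le> card {x\<in>cmp_vertices r a. f x = d} + 1"
      by linarith
  qed (use f1 f2 in auto)
  thus ?thesis unfolding equitably_colorable_def by blast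
qed

theorem mainTheorem6:
  fixes r n :: nat and ms :: "nat \<Rightarrow> nat" and m h k :: nat
  assumes r_pos: "r \<ge> 1" and n_pos: "n \<ge> 1"
    and ms_pos: "\<forall>i\<in>{1..r}. ms i \<ge> 1"
    and m_def: "m = (\<Sum>i=1..r. ms i)"
    and m_le: "m \<le> n"
    and floor_cond: "(\<Sum>i=1..r. \<lfloor>real (ms i * n) / real (m + 1)\<rfloor>) \<ge> \<lfloor>real (m * n) / real (m + 1)\<rfloor>"
    and ceil_cond: "\<forall>i\<in>{1..r}. real (ms i * n) / real (m + 1) \<ge> real_of_int \<lceil>real (ms i * n) / real (m + 2)\<rceil>"
    and h_def: "h = (LEAST t::nat. t \<ge> m + 2 \<and>
         ((\<exists>i\<in>{1..r}. real (ms i * n) / real t < real_of_int \<lceil>real (ms i * n) / real (t + 1)\<rceil>) \<or>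
          (\<exists>i\<in>{1..r}. \<exists>j\<in>{1..r}. i \<noteq> j \<and> \<not> t dvd ms i * n \<and> \<not> t dvd ms j * n)))"
    and k_lo: "(\<Sum>i=1..r. \<lceil>real (ms i * n) / real h\<rceil>) \<le> int k"
    and k_hi: "int k \<le> \<lceil>real (m * n) / real (m + 1)\<rceil> - 1"
  shows "equitably_colorable (cmp_vertices r (\<lambda>i. ms i * n)) cmp_adj k"
proof -
  define a where "a i = ms i * n" for i
  define N where "N = m * n"
  have apos: "\<forall>i\<in>{1..r}. a i \<ge> 1" using ms_pos n_pos by (simp add: a_def)
  have NS: "N = (\<Sum>i=1..r. a i)" unfolding N_def a_def m_def by (simp add: sum_distrib_right)
  have m1: "m \<ge> 1"
  proof -
    have "ms 1 \<le> m" unfolding m_def using r_pos by (intro member_le_sum) auto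
    thus ?thesis using ms_pos r_pos by force
  qed
  have Npos: "N \<ge> 1" using m1 n_pos by (simp add: N_def)
  have F1: "N div (m+1) \<le> (\<Sum>i=1..r. a i div (m+1))"
  proof -
    have e: "\<And>x. \<lfloor>real x / real (m + 1)\<rfloor> = int (x div (m+1))"
      using floor_divide_of_nat_eq by blast
    have "int (N div (m+1)) \<le> (\<Sum>i=1..r. int (a i div (m+1)))"
      using floor_cond unfolding a_def N_def e .
    thus ?thesis by (simp flip: of_nat_sum)
  qed
  have F2: "\<forall>i\<in>{1..r}. cdiv (a i) (m+2) \<le> a i div (m+1)"
  proof
    fix i assume i: "i \<in> {1..r}"
    have c: "real_of_int \<lceil>real (a i) / real (m+2)\<rceil> \<le> real (a i) / real (m+1)"
      using ceil_cond i unfolding a_def by blast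
    have "real_of_int (int (cdiv (a i) (m+2))) \<le> real (a i) / real (m+1)"
      using c ceiling_cdiv[of "m+2" "a i"] by simp
    hence "real (cdiv (a i) (m+2)) \<le> real (a i) / real (m+1)" by simp
    hence "real (cdiv (a i) (m+2)) * real (m+1) \<le> real (a i)" by (simp add: field_simps)
    hence "cdiv (a i) (m+2) * (m+1) \<le> a i" by (metis of_nat_le_iff of_nat_mult)
    thus "cdiv (a i) (m+2) \<le> a i div (m+1)" using le_div_iff'[of "m+1"] by simp
  qed
  define Q where "Q t \<longleftrightarrow> t \<ge> m + 2 \<and>
         ((\<exists>i\<in>{1..r}. real (ms i * n) / real t < real_of_int \<lceil>real (ms i * n) / real (t + 1)\<rceil>) \<or>
          (\<exists>i\<in>{1..r}. \<exists>j\<in>{1..r}. i \<noteq> j \<and> \<not> t dvd ms i * n \<and> \<not> t dvd ms j * n))" for t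
  have hQ: "h = (LEAST t. Q t)" unfolding h_def Q_def ..
  have Qex: "Q (N + m + 2)"
  proof -
    let ?t = "N + m + 2"
    have r1: "1 \<in> {1..r}" using r_pos by simp
    have "a 1 \<le> N" unfolding NS using r1 by (intro member_le_sum) auto
    hence "real (a 1) < real ?t" by simp
    hence "real (a 1) / real ?t < 1" by simp
    moreover have "a 1 \<ge> 1" using apos r1 by blast
    hence "0 < real (a 1) / real (?t + 1)" by simp
    hence "1 \<le> \<lceil>real (a 1) / real (?t + 1)\<rceil>" by (simp add: le_ceiling_iff)
    ultimately have "real (a 1) / real ?t < real_of_int \<lceil>real (a 1) / real (?t + 1)\<rceil>" by linarith
    thus ?thesis unfolding Q_def a_def using r1 by auto
  qed
  have hge: "h \<ge> m + 2" using LeastI[of Q, OF Qex] unfolding hQ Q_def by blast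
  have hpos: "h > 0" using hge by simp
  have notQ: "\<And>t. m + 2 \<le> t \<Longrightarrow> t < h \<Longrightarrow> \<not> Q t" unfolding hQ using not_less_Least by blast
  have good1: "\<forall>i\<in>{1..r}. cdiv (a i) (t+1) \<le> a i div t" if t: "m + 2 \<le> t" "t < h" for t
  proof
    fix i assume i: "i \<in> {1..r}"
    have tp: "t > 0" using t by simp
    have "\<not> (real (a i) / real t < real_of_int \<lceil>real (a i) / real (t + 1)\<rceil>)"
      using notQ[OF t] i unfolding Q_def a_def using t by auto
    hence "real (cdiv (a i) (t+1)) \<le> real (a i) / real t" using ceiling_cdiv[of "t+1" "a i"] by simp
    hence "real (cdiv (a i) (t+1)) * real t \<le> real (a i)" using tp by (simp add: field_simps)
    hence "cdiv (a i) (t+1) * t \<le> a i" by (metis of_nat_le_iff of_nat_mult)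
    thus "cdiv (a i) (t+1) \<le> a i div t" using le_div_iff'[OF tp] by simp
  qed
  have good2: "(\<Sum>i=1..r. cdiv (a i) t) = cdiv N t \<and> (\<Sum>i=1..r. a i div t) = N div t"
    if t: "m + 2 \<le> t" "t < h" for t
  proof -
    have tp: "t > 0" using t by simp
    have "\<forall>i\<in>{1..r}. \<forall>j\<in>{1..r}. i \<noteq> j \<longrightarrow> t dvd a i \<or> t dvd a j"
      using notQ[OF t] unfolding Q_def a_def using t by blast
    thus ?thesis using dvd_sums[OF tp] unfolding NS by blast
  qed
  have KL: "(\<Sum>i=1..r. cdiv (a i) h) \<le> k"
  proof -
    have "(\<Sum>i=1..r. \<lceil>real (ms i * n) / real h\<rceil>) = (\<Sum>i=1..r. int (cdiv (a i) h))"
      unfolding a_def by (intro sum.cong refl ceiling_cdiv[OF hpos])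
    thus ?thesis using k_lo by (simp flip: of_nat_sum)
  qed
  have KH: "k * (m+1) < N"
  proof -
    have "int k + 1 \<le> \<lceil>real N / real (m + 1)\<rceil>" using k_hi unfolding N_def by simp
    hence "real k < real N / real (m+1)" by (simp add: le_ceiling_iff)
    hence "real k * real (m+1) < real N" by (simp add: field_simps)
    thus ?thesis by (metis of_nat_less_iff of_nat_mult)
  qed
  have Nkh: "N \<le> k * h"
  proof -
    have "N \<le> (\<Sum>i=1..r. cdiv (a i) h * h)" unfolding NS
      by (intro sum_mono cdiv_ge[OF hpos])
    also have "\<dots> = (\<Sum>i=1..r. cdiv (a i) h) * h" by (simp add: sum_distrib_right)
    also have "\<dots> \<le> k * h" using KL by simp
    finally show ?thesis .
  qed
  have kpos: "k > 0" using Nkh Npos by (cases k) auto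
  define s where "s = N div k"
  have sk: "s * k \<le> N" unfolding s_def by simp
  have sk2: "N < (s+1) * k"
  proof -
    have "N = s * k + N mod k" unfolding s_def by simp
    moreover have "N mod k < k" using kpos by simp
    ultimately show ?thesis by simp
  qed
  have sge: "s \<ge> m + 1" unfolding s_def using le_div_iff'[OF kpos] KH by (simp add: mult.commute)
  have sle: "s \<le> h"
  proof -
    have "s * k \<le> h * k" using sk Nkh by (metis le_trans mult.commute)
    thus ?thesis using kpos by (metis mult_le_cancel2)
  qed
  have spos: "s > 0" using sge by simp
  have G: "(\<forall>i\<in>{1..r}. cdiv (a i) (s+1) \<le> a i div s) \<and> (\<Sum>i=1..r. cdiv (a i) (s+1)) \<le> k
      \<and> k \<le> (\<Sum>i=1..r. a i div s)"
  proof (cases "s = h")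
    case True
    have Nk: "N = k * h" using sk Nkh True by (simp add: mult.commute)
    have D0: "(\<Sum>i=1..r. cdiv (a i) h * h - a i) = 0"
    proof -
      have "(\<Sum>i=1..r. cdiv (a i) h * h - a i) = (\<Sum>i=1..r. cdiv (a i) h * h) - (\<Sum>i=1..r. a i)"
        by (intro sum_subtractf_nat) (use cdiv_ge[OF hpos] in auto)
      also have "\<dots> \<le> k * h - N"
      proof -
        have "(\<Sum>i=1..r. cdiv (a i) h * h) = (\<Sum>i=1..r. cdiv (a i) h) * h" by (simp add: sum_distrib_right)
        also have "\<dots> \<le> k * h" using KL by simp
        finally show ?thesis using NS by linarith
      qed
      finally show ?thesis using Nk by simp
    qed
    have dv: "\<forall>i\<in>{1..r}. a i = (a i div h) * h"
    proof
      fix i assume i: "i \<in> {1..r}"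
      have "cdiv (a i) h * h - a i = 0" using D0 i by simp
      hence e: "a i = cdiv (a i) h * h" using cdiv_ge[OF hpos, of "a i"] by simp
      have "a i div h = cdiv (a i) h * h div h" using e by simp
      also have "\<dots> = cdiv (a i) h" using hpos by simp
      finally have "a i div h = cdiv (a i) h" .
      thus "a i = (a i div h) * h" using e by simp
    qed
    have g1: "\<forall>i\<in>{1..r}. cdiv (a i) (h+1) \<le> a i div h"
    proof
      fix i assume i: "i \<in> {1..r}"
      have "(a i div h) * h \<le> (a i div h) * (h+1)" by (intro mult_le_mono2) simp
      hence "a i \<le> (a i div h) * (h+1)" using dv i by simp
      thus "cdiv (a i) (h+1) \<le> a i div h" using cdiv_le_iff[of "h+1"] by simp
    qed
    have sumk: "(\<Sum>i=1..r. a i div h) = k"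
    proof -
      have "(\<Sum>i=1..r. a i div h) * h = (\<Sum>i=1..r. a i div h * h)" by (simp add: sum_distrib_right)
      also have "\<dots> = N" unfolding NS using dv by (intro sum.cong) auto
      finally have "(\<Sum>i=1..r. a i div h) * h = k * h" using Nk by simp
      thus ?thesis using hpos by simp
    qed
    have "(\<Sum>i=1..r. cdiv (a i) (h+1)) \<le> (\<Sum>i=1..r. a i div h)" using g1 by (intro sum_mono) auto
    thus ?thesis using g1 sumk True by simp
  next
    case False
    hence slt: "s < h" using sle by simp
    have G2: "(\<Sum>i=1..r. cdiv (a i) (s+1)) \<le> k"
    proof (cases "s + 1 = h")
      case True thus ?thesis using KL by simp
    next
      case False
      hence "s + 1 < h" using slt by simp
      hence "(\<Sum>i=1..r. cdiv (a i) (s+1)) = cdiv N (s+1)" using good2[of "s+1"] sge by simp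
      moreover have "cdiv N (s+1) \<le> k" using cdiv_le_iff[of "s+1" N k] sk2 by (simp add: mult.commute)
      ultimately show ?thesis by simp
    qed
    show ?thesis
    proof (cases "s = m + 1")
      case True
      have "k \<le> N div (m+1)" using le_div_iff'[of "m+1" k N] KH by simp
      thus ?thesis using True F1 F2 G2 by simp
    next
      case False
      hence s2: "m + 2 \<le> s" using sge by simp
      have "k \<le> N div s" using le_div_iff'[OF spos, of k N] sk by (simp add: mult.commute)
      thus ?thesis using good1[OF s2 slt] good2[OF s2 slt] G2 by simp
    qed
  qed
  have "equitably_colorable (cmp_vertices r a) cmp_adj k"
    using main_comb[OF spos apos] G by blast
  thus ?thesis unfolding a_def .
qed
end
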